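(* Assume the loss function $f(\cdot;\Xi)$ is nonnegative and $B$-Lipschitz for every $\Xi$. Let $\mathcal{D},\tilde{\mathcal{D}}$ be two samples of size $Nn$ (each consisting of $N$ local data sets of size $n$) differing in only a single example. Let $\bar{\mathbf{w}}^T,\bar{\mathbf{v}}^T$ denote the outputs of DFedAvgM after $T$ steps run on $\mathcal{D}$ and $\tilde{\mathcal{D}}$ respectively, and let $\delta_t:=\|\bar{\mathbf{w}}^t-\bar{\mathbf{v}}^t\|$. Then for every $\Xi$ and every $t_0\in\{0,1,\dots,n\}$, under the random selection rule (local samples drawn uniformly at random with replacement), $$\mathbb{E}|f(\bar{\mathbf{w}}^T;\Xi)-f(\bar{\mathbf{v}}^T;\Xi)|\le t_0(\sup f)\left(1-\left(\frac{n-1}{n}\right)^K\right)+B\,\mathbb{E}(\delta_T\mid\delta_{t_0}=0).$$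
   Context: DFedAvgM: $N$ clients connected by a graph with symmetric mixing matrix $\mathbf{M}=[m_{i,j}]$ (nonzero only on graph edges and the diagonal, all-ones vector spanning the null space of $\mathbf{I}-\mathbf{M}$, $\mathbf{I}\succeq\mathbf{M}\succ-\mathbf{I}$). Client $i$ holds local data set $\mathcal{D}_i$ of $n$ examples. In round $t$, each client performs $K$ local steps $\mathbf{w}^{t,k+1}_i=\mathbf{w}^{t,k}_i-\eta_t\nabla f_i(\mathbf{w}^{t,k}_i;\xi^{t,k}_i)+\beta(\mathbf{w}^{t,k}_i-\mathbf{w}^{t,k-1}_i)$, $k=0,\dots,K-1$, with $\mathbf{w}^{t,-1}_i=\mathbf{w}^{t,0}_i$ and $\xi^{t,k}_i$ drawn i.i.d. uniformly with replacement from $\mathcal{D}_i$, then sets $\mathbf{w}^{t+1,0}_i=\sum_\ell m_{i,\ell}\mathbf{w}^{t,K}_\ell$. The averaged iterate is $\bar{\mathbf{w}}^t=\frac1N\sum_i\mathbf{w}^{t,0}_i$ (and $\bar{\mathbf{v}}^t$ analogously for the run on $\tilde{\mathcal{D}}$). $\sup f<\infty$ denotes the uniform bound on the nonnegative loss. *)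

theory Defs
  imports "HOL-Analysis.Analysis" "HOL-Probability.Probability"
begin

text \<open>Mixing matrix on clients 0..N-1 over a graph with (symmetric) edge relation E:
  symmetric, supported on edges and diagonal, null space of I - M spanned by the
  all-ones vector, and I \<succeq> M \<succ> -I (Loewner order, as quadratic forms).\<close>
definition mixing_matrix :: "nat \<Rightarrow> (nat \<Rightarrow> nat \<Rightarrow> bool) \<Rightarrow> (nat \<Rightarrow> nat \<Rightarrow> real) \<Rightarrow> bool" where
  "mixing_matrix N E M \<longleftrightarrow>
     (\<forall>i<N. \<forall>j<N. E i j \<longleftrightarrow> E j i) \<and>
     (\<forall>i<N. \<forall>j<N. M i j = M j i) \<and>
     (\<forall>i<N. \<forall>j<N. M i j \<noteq> 0 \<longrightarrow> i = j \<or> E i j) \<and>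
     (\<forall>x :: nat \<Rightarrow> real.
        (\<forall>i<N. x i - (\<Sum>j<N. M i j * x j) = 0) \<longleftrightarrow> (\<exists>c. \<forall>i<N. x i = c)) \<and>
     (\<forall>x :: nat \<Rightarrow> real.
        (\<Sum>i<N. \<Sum>j<N. M i j * x i * x j) \<le> (\<Sum>i<N. x i ^ 2)) \<and>
     (\<forall>x :: nat \<Rightarrow> real. (\<exists>i<N. x i \<noteq> 0) \<longrightarrow>
        (\<Sum>i<N. x i ^ 2) + (\<Sum>i<N. \<Sum>j<N. M i j * x i * x j) > 0)"

text \<open>K local heavy-ball steps from w0; returns (w^{k-1}, w^k), with w^{-1} = w^0.
  xi k is the example used at local step k; g w z is the gradient of f(.;z) at w.\<close>
fun local_iter :: "('a::real_vector \<Rightarrow> 'z \<Rightarrow> 'a) \<Rightarrow> real \<Rightarrow> real \<Rightarrow> (nat \<Rightarrow> 'z) \<Rightarrow> 'a \<Rightarrow> nat \<Rightarrow> 'a \<times> 'a" where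
  "local_iter g eta beta xi w0 0 = (w0, w0)"
| "local_iter g eta beta xi w0 (Suc k) =
     (let (p, c) = local_iter g eta beta xi w0 k
      in (c, c - eta *\<^sub>R g c (xi k) + beta *\<^sub>R (c - p)))"

text \<open>Client iterates w_i^{t,0} of DFedAvgM. D i j = j-th example of client i,
  s (t,i,k) = index (in 0..n-1) drawn by client i at local step k of round t.\<close>
fun dfedavgm :: "(nat \<Rightarrow> nat \<Rightarrow> real) \<Rightarrow> nat \<Rightarrow> nat \<Rightarrow> ('a::real_vector \<Rightarrow> 'z \<Rightarrow> 'a) \<Rightarrow> (nat \<Rightarrow> real) \<Rightarrow> real
     \<Rightarrow> (nat \<Rightarrow> nat \<Rightarrow> 'z) \<Rightarrow> (nat \<Rightarrow> 'a) \<Rightarrow> (nat \<times> nat \<times> nat \<Rightarrow> nat) \<Rightarrow> nat \<Rightarrow> nat \<Rightarrow> 'a" where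
  "dfedavgm M N K g eta beta D w0 s 0 = w0"
| "dfedavgm M N K g eta beta D w0 s (Suc t) =
     (\<lambda>i. \<Sum>l<N. M i l *\<^sub>R
        snd (local_iter g (eta t) beta (\<lambda>k. D l (s (t, l, k))) (dfedavgm M N K g eta beta D w0 s t l) K))"

definition dfedavgm_avg :: "(nat \<Rightarrow> nat \<Rightarrow> real) \<Rightarrow> nat \<Rightarrow> nat \<Rightarrow> ('a::real_vector \<Rightarrow> 'z \<Rightarrow> 'a) \<Rightarrow> (nat \<Rightarrow> real) \<Rightarrow> real
     \<Rightarrow> (nat \<Rightarrow> nat \<Rightarrow> 'z) \<Rightarrow> (nat \<Rightarrow> 'a) \<Rightarrow> (nat \<times> nat \<times> nat \<Rightarrow> nat) \<Rightarrow> nat \<Rightarrow> 'a" where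
  "dfedavgm_avg M N K g eta beta D w0 s t =
     (1 / real N) *\<^sub>R (\<Sum>i<N. dfedavgm M N K g eta beta D w0 s t i)"

definition selection_pmf :: "nat \<Rightarrow> nat \<Rightarrow> nat \<Rightarrow> nat \<Rightarrow> (nat \<times> nat \<times> nat \<Rightarrow> nat) pmf" where
  "selection_pmf N K n R = Pi_pmf ({..<R} \<times> {..<N} \<times> {..<K}) 0 (\<lambda>_. pmf_of_set {..<n})"

definition cond_expect_event :: "'s pmf \<Rightarrow> 's set \<Rightarrow> ('s \<Rightarrow> real) \<Rightarrow> real" where
  "cond_expect_event P A X =
     measure_pmf.expectation P (\<lambda>s. indicator A s * X s) / measure_pmf.prob P A"

end

theory Submission imports Defs begin

lemma local_iter_cong:
  "(\<And>k. k < m \<Longrightarrow> xi k = xi' k) \<Longrightarrow> local_iter g eta beta xi w m = local_iter g eta beta xi' w m"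
  by (induction m) (auto simp: Let_def split: prod.splits)

lemma dfed_agree:
  assumes "\<And>i j. (i, j) \<noteq> (i0, j0) \<Longrightarrow> D i j = D' i j"
    and "\<forall>t'<t. \<forall>k<K. s (t', i0, k) \<noteq> j0"
  shows "dfedavgm M N K g eta beta D w0 s t = dfedavgm M N K g eta beta D' w0 s t"
  using assms(2)
proof (induction t)
  case 0 then show ?case by simp
next
  case (Suc t)
  then have IH: "dfedavgm M N K g eta beta D w0 s t = dfedavgm M N K g eta beta D' w0 s t" by auto
  have "local_iter g (eta t) beta (\<lambda>k. D l (s (t, l, k))) w K
      = local_iter g (eta t) beta (\<lambda>k. D' l (s (t, l, k))) w K" for l w
    apply (rule local_iter_cong)
    using Suc.prems assms(1) by (metis lessI prod.inject)
  then show ?case by (simp add: IH)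
qed

lemma round_prob:
  assumes "t < R" "i0 < N" "j0 < n"
  shows "measure_pmf.prob (selection_pmf N K n R) {s. \<exists>k<K. s (t, i0, k) = j0}
         = 1 - ((real n - 1) / real n) ^ K"
proof -
  define AA where "AA = {..<R} \<times> {..<N} \<times> {..<K}"
  define KS where "KS = (\<lambda>k. (t, i0, k)) ` {..<K}"
  define Bf where "Bf = (\<lambda>x. if x \<in> KS then - {j0} else (UNIV :: nat set))"
  have KS: "KS \<subseteq> AA" using assms by (auto simp: KS_def AA_def)
  have fin: "finite AA" by (simp add: AA_def)
  have eq: "- {s. \<exists>k<K. s (t, i0, k) = j0} = Pi AA Bf"
  proof (intro equalityI subsetI)
    fix s assume "s \<in> - {s. \<exists>k<K. s (t, i0, k) = j0}"
    then show "s \<in> Pi AA Bf" by (auto simp: Bf_def KS_def Pi_def)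
  next
    fix s assume s: "s \<in> Pi AA Bf"
    have "s (t, i0, k) \<noteq> j0" if "k < K" for k
    proof -
      have "(t, i0, k) \<in> KS" using that by (auto simp: KS_def)
      moreover have "s (t, i0, k) \<in> Bf (t, i0, k)" using s KS \<open>(t, i0, k) \<in> KS\<close> by blast
      ultimately show ?thesis by (simp add: Bf_def)
    qed
    then show "s \<in> - {s. \<exists>k<K. s (t, i0, k) = j0}" by auto
  qed
  have p1: "measure_pmf.prob (pmf_of_set {..<n}) (-{j0}) = (real n - 1) / real n"
  proof -
    have "{..<n} \<inter> - {j0} = {..<n} - {j0}" by auto
    moreover have "card ({..<n} - {j0}) = n - 1" using assms by (simp add: card_Diff_singleton)
    moreover have "{..<n} \<noteq> ({}::nat set)" using assms by auto
    ultimately show ?thesis using assms by (simp add: measure_pmf_of_set of_nat_diff)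
  qed
  have "measure_pmf.prob (selection_pmf N K n R) (Pi AA Bf)
        = (\<Prod>x\<in>AA. measure_pmf.prob (pmf_of_set {..<n}) (Bf x))"
    unfolding selection_pmf_def AA_def[symmetric] by (rule measure_Pi_pmf_Pi[OF fin])
  also have "\<dots> = (\<Prod>x\<in>AA. if x \<in> KS then (real n - 1) / real n else 1)"
    by (intro prod.cong) (auto simp: Bf_def p1)
  also have "\<dots> = ((real n - 1) / real n) ^ card KS"
    using KS fin by (simp add: prod.If_cases Int_absorb1)
  also have "card KS = K" unfolding KS_def by (subst card_image) (auto simp: inj_on_def)
  finally have "measure_pmf.prob (selection_pmf N K n R) (- {s. \<exists>k<K. s (t, i0, k) = j0})
     = ((real n - 1) / real n) ^ K" by (simp add: eq)
  moreover have "measure_pmf.prob (selection_pmf N K n R) (- {s. \<exists>k<K. s (t, i0, k) = j0})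
     = 1 - measure_pmf.prob (selection_pmf N K n R) {s. \<exists>k<K. s (t, i0, k) = j0}"
    using measure_pmf.prob_compl[of "{s. \<exists>k<K. s (t, i0, k) = j0}" "selection_pmf N K n R"]
    by (simp add: Compl_eq_Diff_UNIV)
  ultimately show ?thesis by simp
qed

theorem lemmaA4:
  fixes f :: "'a::euclidean_space \<Rightarrow> 'z \<Rightarrow> real" and g :: "'a \<Rightarrow> 'z \<Rightarrow> 'a"
    and M :: "nat \<Rightarrow> nat \<Rightarrow> real" and E :: "nat \<Rightarrow> nat \<Rightarrow> bool"
    and N n K T t0 i0 j0 :: nat and eta :: "nat \<Rightarrow> real" and beta B :: real
    and D D' :: "nat \<Rightarrow> nat \<Rightarrow> 'z" and w0 :: "nat \<Rightarrow> 'a" and \<Xi> :: 'z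
  assumes "N \<ge> 1" and "n \<ge> 1"
    and "mixing_matrix N E M"
    and "\<And>w z. f w z \<ge> 0"
    and "bdd_above (range (case_prod f))"
    and "\<And>z. B-lipschitz_on UNIV (\<lambda>w. f w z)"
    and "\<And>w z. GDERIV (\<lambda>v. f v z) w :> g w z"
    and "i0 < N" and "j0 < n"
    and "\<And>i j. (i, j) \<noteq> (i0, j0) \<Longrightarrow> D i j = D' i j"
    and "t0 \<le> n"
  shows "measure_pmf.expectation (selection_pmf N K n (max T t0))
           (\<lambda>s. \<bar>f (dfedavgm_avg M N K g eta beta D w0 s T) \<Xi>
                 - f (dfedavgm_avg M N K g eta beta D' w0 s T) \<Xi>\<bar>)
         \<le> real t0 * (SUP p. case_prod f p) * (1 - ((real n - 1) / real n) ^ K)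
           + B * cond_expect_event (selection_pmf N K n (max T t0))
                   {s. norm (dfedavgm_avg M N K g eta beta D w0 s t0
                             - dfedavgm_avg M N K g eta beta D' w0 s t0) = 0}
                   (\<lambda>s. norm (dfedavgm_avg M N K g eta beta D w0 s T
                             - dfedavgm_avg M N K g eta beta D' w0 s T))"
proof -
  define P where "P = selection_pmf N K n (max T t0)"
  define W where "W = (\<lambda>s. dfedavgm_avg M N K g eta beta D w0 s T)"
  define V where "V = (\<lambda>s. dfedavgm_avg M N K g eta beta D' w0 s T)"
  define A where "A = {s. norm (dfedavgm_avg M N K g eta beta D w0 s t0
                             - dfedavgm_avg M N K g eta beta D' w0 s t0) = 0}"
  define S where "S = (SUP p. case_prod f p)"
  define q where "q = 1 - ((real n - 1) / real n) ^ K"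
  define Y where "Y = (\<lambda>s. norm (W s - V s))"
  define R where "R = (\<lambda>t::nat. {s::nat\<times>nat\<times>nat\<Rightarrow>nat. \<exists>k<K. s (t, i0, k) = j0})"
  have fs: "finite (set_pmf P)"
  proof -
    have "(0::nat) \<in> {..<n}" using assms(2) by auto
    then have "{..<n} \<noteq> ({}::nat set)" by blast
    then have "set_pmf (pmf_of_set {..<n}) = {..<n}" by (simp add: set_pmf_of_set)
    then show ?thesis unfolding P_def selection_pmf_def by (subst set_Pi_pmf) (auto intro!: finite_PiE_dflt)
  qed
  note integ = integrable_measure_pmf_finite[OF fs]
  have fS: "f w z \<le> S" for w z
  proof -
    have "case_prod f (w, z) \<le> S" unfolding S_def by (rule cSUP_upper) (use assms(5) in auto)
    then show ?thesis by simp
  qed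
  have S0: "0 \<le> S" using fS[of undefined undefined] assms(4)[of undefined undefined] by linarith
  have B0: "0 \<le> B" using assms(6) lipschitz_on_nonneg by blast
  have sub: "- A \<subseteq> (\<Union>t\<in>{..<t0}. R t)"
  proof
    fix s assume "s \<in> - A"
    show "s \<in> (\<Union>t\<in>{..<t0}. R t)"
    proof (rule ccontr)
      assume "s \<notin> (\<Union>t\<in>{..<t0}. R t)"
      then have "\<forall>t'<t0. \<forall>k<K. s (t', i0, k) \<noteq> j0" by (auto simp: R_def)
      from dfed_agree[OF assms(10) this] have "dfedavgm M N K g eta beta D w0 s t0 = dfedavgm M N K g eta beta D' w0 s t0" .
      then have "s \<in> A" by (simp add: A_def dfedavgm_avg_def)
      with \<open>s \<in> - A\<close> show False by simp
    qed
  qed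
  have pA: "measure_pmf.prob P (- A) \<le> real t0 * q"
  proof -
    have "measure_pmf.prob P (- A) \<le> measure_pmf.prob P (\<Union>t\<in>{..<t0}. R t)"
      using sub by (intro measure_pmf.finite_measure_mono) auto
    also have "\<dots> \<le> (\<Sum>t\<in>{..<t0}. measure_pmf.prob P (R t))"
      by (rule measure_UNION_le) auto
    also have "\<dots> = (\<Sum>t\<in>{..<t0}. q)"
      unfolding P_def R_def q_def
      by (intro sum.cong refl round_prob) (use assms in auto)
    finally show ?thesis by simp
  qed
  have pw: "\<bar>f (W s) \<Xi> - f (V s) \<Xi>\<bar> \<le> B * (indicator A s * Y s) + S * indicator (- A) s" for s
  proof (cases "s \<in> A")
    case True
    have "dist (f (W s) \<Xi>) (f (V s) \<Xi>) \<le> B * dist (W s) (V s)"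
      by (rule lipschitz_onD[OF assms(6)]) auto
    then show ?thesis using True by (simp add: Y_def dist_real_def dist_norm)
  next
    case False
    have "\<bar>f (W s) \<Xi> - f (V s) \<Xi>\<bar> \<le> S"
      using fS[of "W s" \<Xi>] fS[of "V s" \<Xi>] assms(4)[of "W s" \<Xi>] assms(4)[of "V s" \<Xi>] by linarith
    then show ?thesis using False by simp
  qed
  have "measure_pmf.expectation P (\<lambda>s. \<bar>f (W s) \<Xi> - f (V s) \<Xi>\<bar>)
        \<le> measure_pmf.expectation P (\<lambda>s. B * (indicator A s * Y s) + S * indicator (- A) s)"
    by (intro integral_mono integ pw)
  also have "\<dots> = B * measure_pmf.expectation P (\<lambda>s. indicator A s * Y s) + S * measure_pmf.prob P (- A)"
    using Bochner_Integration.integral_add[OF integ integ, of "\<lambda>s. B * (indicator A s * Y s)" "\<lambda>s. S * indicator (- A) s"]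
    by simp
  finally have main: "measure_pmf.expectation P (\<lambda>s. \<bar>f (W s) \<Xi> - f (V s) \<Xi>\<bar>)
     \<le> B * measure_pmf.expectation P (\<lambda>s. indicator A s * Y s) + S * measure_pmf.prob P (- A)" .
  have c1: "S * measure_pmf.prob P (- A) \<le> real t0 * S * q"
    using mult_left_mono[OF pA S0] by (simp add: mult_ac)
  have c2: "measure_pmf.expectation P (\<lambda>s. indicator A s * Y s) \<le> cond_expect_event P A Y"
  proof (cases "measure_pmf.prob P A = 0")
    case True
    then have "set_pmf P \<inter> A = {}" by (simp add: measure_pmf_zero_iff)
    then have "measure_pmf.expectation P (\<lambda>s. indicator A s * Y s) = (\<Sum>a\<in>{}. pmf P a *\<^sub>R (indicator A a * Y a))"
      by (intro integral_measure_pmf) (auto simp: indicator_def)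
    then show ?thesis using True by (simp add: cond_expect_event_def)
  next
    case False
    then have p0: "0 < measure_pmf.prob P A" by (simp add: order_less_le)
    have p1: "measure_pmf.prob P A \<le> 1" by simp
    have E0: "0 \<le> measure_pmf.expectation P (\<lambda>s. indicator A s * Y s)"
      by (intro Bochner_Integration.integral_nonneg) (auto simp: Y_def)
    have "measure_pmf.expectation P (\<lambda>s. indicator A s * Y s) * measure_pmf.prob P A
          \<le> measure_pmf.expectation P (\<lambda>s. indicator A s * Y s)"
      using mult_left_mono[OF p1 E0] by simp
    then show ?thesis using p0 by (simp add: cond_expect_event_def le_divide_eq)
  qed
  have "B * measure_pmf.expectation P (\<lambda>s. indicator A s * Y s) \<le> B * cond_expect_event P A Y"
    by (rule mult_left_mono[OF c2 B0])
  with main c1 have "measure_pmf.expectation P (\<lambda>s. \<bar>f (W s) \<Xi> - f (V s) \<Xi>\<bar>)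
     \<le> real t0 * S * q + B * cond_expect_event P A Y" by linarith
  then show ?thesis by (simp add: P_def W_def V_def A_def S_def q_def Y_def)
qed

end
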